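(* Let $Q=(Q_0,Q_1,\rho)$ be a finite $n$-properly-graded bound quiver with fixed basis $\mathcal M$ of $\Lambda_n$ as below. If $Q$ is nicely-graded, then $\mathbb Z|_{n-1}Q$ is also nicely-graded.
   Context: $k$ is a field. Bound quivers have relations that are linear combinations of paths of equal length $\ge 2$ with common source and target; paths are composed right to left; $s(p),t(p),l(p)$ denote source, target, length; $\Lambda=kQ/(\rho)$ is graded by path length and a bound path is a path with nonzero image. $Q$ is $n$-properly-graded if all maximal bound paths have length $n$. A walk is a sequence $w=(p_0,\dots,p_r)$ of paths with $l(p_h)>0$ for $0<h<r$, $t(p_{2h})=t(p_{2h+1})$, $s(p_{2h+1})=s(p_{2h+2})$, from $s(p_0)$ to $t(p_r)$ ($r$ even) or $s(p_r)$ ($r$ odd), cyclic if start equals end, with grade $\sum_h(-1)^hl(p_h)$; a quiver is nicely-graded if every cyclic walk has grade $0$. For $Q$ finite $n$-properly-graded, fix a basis $\mathcal M$ of $\Lambda_n$ consisting of images of maximal bound paths. The quiver $\mathbb Z|_{n-1}Q$ has vertex set $Q_0\times\mathbb Z$ and arrows $(\alpha,t):(i,t)\to(j,t)$ for each arrow $\alpha:i\to j$ of $Q$ and $t\in\mathbb Z$, and $(\beta_p,t):(t(p),t)\to(s(p),t+1)$ for each $p\in\mathcal M$ and $t\in\mathbb Z$. (Its relations, which play no role in being nicely-graded, are the lifts of the relations of the trivial extension $\Lambda\ltimes D\Lambda$.) *)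

theory Defs
  imports Main
begin

record ('v, 'a) quiver =
  qverts :: "'v set"
  qarrs  :: "'a set"
  qsrc   :: "'a \<Rightarrow> 'v"
  qtgt   :: "'a \<Rightarrow> 'v"

definition finite_quiver :: "('v, 'a) quiver \<Rightarrow> bool" where
  "finite_quiver Q \<longleftrightarrow> finite (qverts Q) \<and> finite (qarrs Q) \<and>
     (\<forall>\<alpha>\<in>qarrs Q. qsrc Q \<alpha> \<in> qverts Q \<and> qtgt Q \<alpha> \<in> qverts Q)"

text \<open>A path is a start vertex together with the list of its arrows in traversal order
  (the first arrow traversed comes first in the list).  Paths of length 0 are the trivial
  paths at the vertices.\<close>
type_synonym ('v, 'a) path = "'v \<times> 'a list"

definition is_path :: "('v, 'a) quiver \<Rightarrow> ('v, 'a) path \<Rightarrow> bool" where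
  "is_path Q p \<longleftrightarrow> fst p \<in> qverts Q \<and> set (snd p) \<subseteq> qarrs Q \<and>
     (snd p \<noteq> [] \<longrightarrow> qsrc Q (hd (snd p)) = fst p) \<and>
     (\<forall>k. Suc k < length (snd p) \<longrightarrow> qtgt Q (snd p ! k) = qsrc Q (snd p ! Suc k))"

definition psrc :: "('v, 'a) path \<Rightarrow> 'v" where
  "psrc p = fst p"

definition ptgt :: "('v, 'a) quiver \<Rightarrow> ('v, 'a) path \<Rightarrow> 'v" where
  "ptgt Q p = (if snd p = [] then fst p else qtgt Q (last (snd p)))"

definition plen :: "('v, 'a) path \<Rightarrow> nat" where
  "plen p = length (snd p)"

text \<open>Composition right to left: \<open>pcomp p q\<close> is "p after q" (first q, then p);
  it is meaningful when \<open>ptgt Q q = psrc p\<close>.\<close>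
definition pcomp :: "('v, 'a) path \<Rightarrow> ('v, 'a) path \<Rightarrow> ('v, 'a) path" where
  "pcomp p q = (fst q, snd q @ snd p)"

definition composable :: "('v, 'a) quiver \<Rightarrow> ('v, 'a) path \<Rightarrow> ('v, 'a) path \<Rightarrow> bool" where
  "composable Q p q \<longleftrightarrow> ptgt Q q = psrc p"

text \<open>Elements of the path algebra kQ are represented as finitely supported
  functions from paths to k.\<close>

definition supp :: "(('v, 'a) path \<Rightarrow> 'k::zero) \<Rightarrow> ('v, 'a) path set" where
  "supp f = {q. f q \<noteq> 0}"

definition delta :: "('v, 'a) path \<Rightarrow> ('v, 'a) path \<Rightarrow> 'k::{zero,one}" where
  "delta p = (\<lambda>x. if x = p then 1 else 0)"

text \<open>The product \<open>u f v\<close> in kQ of paths u, v and an element f.\<close>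
definition sandwich :: "('v, 'a) quiver \<Rightarrow> ('v, 'a) path \<Rightarrow> (('v, 'a) path \<Rightarrow> 'k::comm_ring_1)
     \<Rightarrow> ('v, 'a) path \<Rightarrow> ('v, 'a) path \<Rightarrow> 'k" where
  "sandwich Q u f v = (\<lambda>x. \<Sum>q\<in>supp f.
      if composable Q u q \<and> composable Q q v \<and> x = pcomp u (pcomp q v) then f q else 0)"

definition is_relation :: "('v, 'a) quiver \<Rightarrow> (('v, 'a) path \<Rightarrow> 'k::zero) \<Rightarrow> bool" where
  "is_relation Q r \<longleftrightarrow> finite (supp r) \<and>
     (\<exists>L i j. L \<ge> 2 \<and> (\<forall>q\<in>supp r. is_path Q q \<and> plen q = L \<and> psrc q = i \<and> ptgt Q q = j))"

inductive_set rel_ideal :: "('v, 'a) quiver \<Rightarrow> (('v, 'a) path \<Rightarrow> 'k::comm_ring_1) set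
     \<Rightarrow> (('v, 'a) path \<Rightarrow> 'k) set"
  for Q \<rho> where
  zero: "(\<lambda>_. 0) \<in> rel_ideal Q \<rho>"
| step: "\<lbrakk>f \<in> rel_ideal Q \<rho>; r \<in> \<rho>; is_path Q u; is_path Q v\<rbrakk>
          \<Longrightarrow> (\<lambda>x. f x + c * sandwich Q u r v x) \<in> rel_ideal Q \<rho>"

definition bound_quiver :: "('v, 'a) quiver \<Rightarrow> (('v, 'a) path \<Rightarrow> 'k::field) set \<Rightarrow> bool" where
  "bound_quiver Q \<rho> \<longleftrightarrow> (\<forall>r\<in>\<rho>. is_relation Q r)"

text \<open>A bound path: a path whose image in \<open>\<Lambda> = kQ/(\<rho>)\<close> is nonzero.\<close>
definition bound_path :: "('v, 'a) quiver \<Rightarrow> (('v, 'a) path \<Rightarrow> 'k::field) set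
     \<Rightarrow> ('v, 'a) path \<Rightarrow> bool" where
  "bound_path Q \<rho> p \<longleftrightarrow> is_path Q p \<and> (delta p :: ('v, 'a) path \<Rightarrow> 'k) \<notin> rel_ideal Q \<rho>"

definition maximal_bound_path :: "('v, 'a) quiver \<Rightarrow> (('v, 'a) path \<Rightarrow> 'k::field) set
     \<Rightarrow> ('v, 'a) path \<Rightarrow> bool" where
  "maximal_bound_path Q \<rho> p \<longleftrightarrow> bound_path Q \<rho> p \<and>
     \<not> (\<exists>u v. is_path Q u \<and> is_path Q v \<and> composable Q u p \<and> composable Q p v \<and>
             plen u + plen v > 0 \<and> bound_path Q \<rho> (pcomp u (pcomp p v)))"

definition properly_graded :: "nat \<Rightarrow> ('v, 'a) quiver \<Rightarrow> (('v, 'a) path \<Rightarrow> 'k::field) set \<Rightarrow> bool" where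
  "properly_graded n Q \<rho> \<longleftrightarrow> (\<forall>p. maximal_bound_path Q \<rho> p \<longrightarrow> plen p = n)"

text \<open>\<open>M\<close> is a set of maximal bound paths whose images form a basis of \<open>\<Lambda>_n\<close>
  (the degree-n part of \<open>\<Lambda>\<close>, spanned by the images of the paths of length n).\<close>
definition top_basis :: "nat \<Rightarrow> ('v, 'a) quiver \<Rightarrow> (('v, 'a) path \<Rightarrow> 'k::field) set
     \<Rightarrow> ('v, 'a) path set \<Rightarrow> bool" where
  "top_basis n Q \<rho> M \<longleftrightarrow>
     finite M \<and> (\<forall>p\<in>M. maximal_bound_path Q \<rho> p) \<and>
     (\<forall>c::('v, 'a) path \<Rightarrow> 'k. (\<lambda>x. if x \<in> M then c x else 0) \<in> rel_ideal Q \<rho>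
          \<longrightarrow> (\<forall>p\<in>M. c p = 0)) \<and>
     (\<forall>q. is_path Q q \<and> plen q = n \<longrightarrow>
          (\<exists>c::('v, 'a) path \<Rightarrow> 'k.
             (\<lambda>x. delta q x - (if x \<in> M then c x else 0)) \<in> rel_ideal Q \<rho>))"

definition is_walk :: "('v, 'a) quiver \<Rightarrow> ('v, 'a) path list \<Rightarrow> bool" where
  "is_walk Q w \<longleftrightarrow> w \<noteq> [] \<and> (\<forall>p\<in>set w. is_path Q p) \<and>
     (\<forall>h. 0 < h \<and> h < length w - 1 \<longrightarrow> plen (w ! h) > 0) \<and>
     (\<forall>h. 2*h + 1 < length w \<longrightarrow> ptgt Q (w ! (2*h)) = ptgt Q (w ! (2*h + 1))) \<and>
     (\<forall>h. 2*h + 2 < length w \<longrightarrow> psrc (w ! (2*h + 1)) = psrc (w ! (2*h + 2)))"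

definition walk_start :: "('v, 'a) path list \<Rightarrow> 'v" where
  "walk_start w = psrc (hd w)"

definition walk_end :: "('v, 'a) quiver \<Rightarrow> ('v, 'a) path list \<Rightarrow> 'v" where
  "walk_end Q w = (if even (length w - 1) then ptgt Q (last w) else psrc (last w))"

definition walk_grade :: "('v, 'a) path list \<Rightarrow> int" where
  "walk_grade w = (\<Sum>h<length w. (-1) ^ h * int (plen (w ! h)))"

definition nicely_graded :: "('v, 'a) quiver \<Rightarrow> bool" where
  "nicely_graded Q \<longleftrightarrow>
     (\<forall>w. is_walk Q w \<and> walk_start w = walk_end Q w \<longrightarrow> walk_grade w = 0)"

datatype ('a, 'p) zarrow = ZAlpha 'a int | ZBeta 'p int

text \<open>Underlying quiver of \<open>\<int>|_{n-1}Q\<close> (its relations play no role for being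
  nicely-graded).\<close>
definition Zquiver :: "('v, 'a) quiver \<Rightarrow> ('v, 'a) path set
     \<Rightarrow> ('v \<times> int, ('a, ('v, 'a) path) zarrow) quiver" where
  "Zquiver Q M = \<lparr> qverts = qverts Q \<times> UNIV,
     qarrs = {ZAlpha \<alpha> t | \<alpha> t. \<alpha> \<in> qarrs Q} \<union> {ZBeta p t | p t. p \<in> M},
     qsrc = (\<lambda>x. case x of ZAlpha \<alpha> t \<Rightarrow> (qsrc Q \<alpha>, t) | ZBeta p t \<Rightarrow> (ptgt Q p, t)),
     qtgt = (\<lambda>x. case x of ZAlpha \<alpha> t \<Rightarrow> (qtgt Q \<alpha>, t) | ZBeta p t \<Rightarrow> (psrc p, t + 1)) \<rparr>"

end

theory Submission
  imports Defs
begin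

definition wfq :: "('v, 'a) quiver \<Rightarrow> bool" where
  "wfq X \<longleftrightarrow> (\<forall>a\<in>qarrs X. qsrc X a \<in> qverts X \<and> qtgt X a \<in> qverts X)"

inductive zz :: "('v, 'a) quiver \<Rightarrow> 'v \<Rightarrow> 'v \<Rightarrow> int \<Rightarrow> bool" for X where
  zrefl: "u \<in> qverts X \<Longrightarrow> zz X u u 0"
| zfwd: "zz X u v k \<Longrightarrow> a \<in> qarrs X \<Longrightarrow> qsrc X a = v \<Longrightarrow> zz X u (qtgt X a) (k + 1)"
| zbwd: "zz X u v k \<Longrightarrow> a \<in> qarrs X \<Longrightarrow> qtgt X a = v \<Longrightarrow> zz X u (qsrc X a) (k - 1)"

lemma zz_in: "zz X u v k \<Longrightarrow> wfq X \<Longrightarrow> u \<in> qverts X \<and> v \<in> qverts X"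
  by (induction rule: zz.induct) (auto simp: wfq_def)

lemma zz_trans: "zz X v x m \<Longrightarrow> zz X u v k \<Longrightarrow> zz X u x (k + m)"
proof (induction rule: zz.induct)
  case (zrefl u)
  then show ?case by simp
next
  case (zfwd v y m a)
  then have "zz X u (qtgt X a) (k + m + 1)" by (blast intro: zz.zfwd)
  then show ?case by (simp add: add.assoc)
next
  case (zbwd v y m a)
  then have "zz X u (qsrc X a) (k + m - 1)" by (blast intro: zz.zbwd)
  then show ?case by (simp add: add_diff_eq)
qed

lemma zz_sym: "zz X u v k \<Longrightarrow> wfq X \<Longrightarrow> zz X v u (- k)"
proof (induction rule: zz.induct)
  case (zrefl u)
  then show ?case by (simp add: zz.zrefl)
next
  case (zfwd u v k a)
  have "qtgt X a \<in> qverts X" using zfwd by (auto simp: wfq_def)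
  then have "zz X (qtgt X a) v (0 - 1)" using zz.zbwd[OF zz.zrefl zfwd.hyps(2) refl] zfwd.hyps(3) by blast
  from zz_trans[OF zfwd.IH[OF zfwd.prems] this] have "zz X (qtgt X a) u ((0 - 1) + - k)" .
  moreover have "(0::int) - 1 + - k = - (k + 1)" by simp
  ultimately show ?case by metis
next
  case (zbwd u v k a)
  have "qsrc X a \<in> qverts X" using zbwd by (auto simp: wfq_def)
  then have "zz X (qsrc X a) v (0 + 1)" using zz.zfwd[OF zz.zrefl zbwd.hyps(2) refl] zbwd.hyps(3) by blast
  from zz_trans[OF zbwd.IH[OF zbwd.prems] this] have "zz X (qsrc X a) u ((0 + 1) + - k)" .
  moreover have "(0::int) + 1 + - k = - (k - 1)" by simp
  ultimately show ?case by metis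
qed

lemma chain_snoc:
  "(\<forall>k. Suc k < length (xs @ [a]) \<longrightarrow> f ((xs @ [a]) ! k) = g ((xs @ [a]) ! Suc k)) \<longleftrightarrow>
   (\<forall>k. Suc k < length xs \<longrightarrow> f (xs ! k) = g (xs ! Suc k)) \<and> (xs \<noteq> [] \<longrightarrow> f (last xs) = g a)"
  (is "?L \<longleftrightarrow> ?R1 \<and> ?R2")
proof
  assume L: ?L
  have R1: ?R1
  proof (intro allI impI)
    fix k assume k: "Suc k < length xs"
    have "f ((xs @ [a]) ! k) = g ((xs @ [a]) ! Suc k)" using L k by simp
    then show "f (xs ! k) = g (xs ! Suc k)" using k by (simp add: nth_append)
  qed
  have ?R2
  proof
    assume ne: "xs \<noteq> []"
    then have "Suc (length xs - 1) < length (xs @ [a])" by simp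
    then have "f ((xs @ [a]) ! (length xs - 1)) = g ((xs @ [a]) ! Suc (length xs - 1))" using L by blast
    moreover have "Suc (length xs - 1) = length xs" using ne by simp
    ultimately show "f (last xs) = g a" using ne by (simp add: nth_append last_conv_nth)
  qed
  with R1 show "?R1 \<and> ?R2" by blast
next
  assume R: "?R1 \<and> ?R2"
  show ?L
  proof (intro allI impI)
    fix k assume k: "Suc k < length (xs @ [a])"
    show "f ((xs @ [a]) ! k) = g ((xs @ [a]) ! Suc k)"
    proof (cases "Suc k < length xs")
      case True
      then show ?thesis using R by (simp add: nth_append)
    next
      case False
      then have e: "Suc k = length xs" using k by simp
      then have ne: "xs \<noteq> []" by auto
      have "k = length xs - 1" using e by simp
      then show ?thesis using R ne e by (simp add: nth_append last_conv_nth)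
    qed
  qed
qed

lemma is_path_snoc:
  "is_path X (v, xs @ [a]) \<longleftrightarrow> is_path X (v, xs) \<and> a \<in> qarrs X \<and> qsrc X a = ptgt X (v, xs)"
  unfolding is_path_def snd_conv fst_conv chain_snoc ptgt_def
  by (cases "xs = []") auto

lemma is_path_nil: "is_path X (v, []) \<longleftrightarrow> v \<in> qverts X"
  by (simp add: is_path_def)

lemma ptgt_cons: "ptgt X (x, a # xs) = ptgt X (qtgt X a, xs)"
  by (simp add: ptgt_def)

lemma is_path_cons:
  assumes "is_path X (v, xs)" "a \<in> qarrs X" "qtgt X a = v" "qsrc X a \<in> qverts X"
  shows "is_path X (qsrc X a, a # xs)"
  unfolding is_path_def
proof (intro conjI allI impI)
  fix k assume k: "Suc k < length (snd (qsrc X a, a # xs))"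
  show "qtgt X (snd (qsrc X a, a # xs) ! k) = qsrc X (snd (qsrc X a, a # xs) ! Suc k)"
  proof (cases k)
    case 0
    then show ?thesis using assms k by (cases xs) (auto simp: is_path_def)
  next
    case (Suc j)
    then show ?thesis using assms k by (auto simp: is_path_def)
  qed
qed (use assms in \<open>auto simp: is_path_def\<close>)

lemma path_zz: "wfq X \<Longrightarrow> is_path X p \<Longrightarrow> zz X (psrc p) (ptgt X p) (int (plen p))"
proof -
  assume wf: "wfq X"
  obtain v xs where p: "p = (v, xs)" by (cases p)
  have "is_path X (v, xs) \<Longrightarrow> zz X v (ptgt X (v, xs)) (int (length xs))"
  proof (induction xs rule: rev_induct)
    case Nil
    then show ?case by (simp add: is_path_def ptgt_def zz.zrefl)
  next
    case (snoc a xs)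
    then have "is_path X (v, xs)" "a \<in> qarrs X" "qsrc X a = ptgt X (v, xs)"
      using is_path_snoc[of X v xs a] by simp_all
    with snoc have "zz X v (qtgt X a) (int (length xs) + 1)" by (metis zz.zfwd)
    then show ?case by (simp add: ptgt_def add.commute)
  qed
  then show "is_path X p \<Longrightarrow> zz X (psrc p) (ptgt X p) (int (plen p))"
    by (simp add: p psrc_def plen_def)
qed

lemma path_tgt_in: "wfq X \<Longrightarrow> is_path X p \<Longrightarrow> ptgt X p \<in> qverts X"
proof -
  assume a: "wfq X" "is_path X p"
  show ?thesis using zz_in[OF path_zz[OF a] a(1)] by simp
qed

lemma is_walk_single: "is_walk X [p] \<longleftrightarrow> is_path X p"
  by (simp add: is_walk_def)

lemma is_walk_snoc:
  assumes ne: "w \<noteq> []"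
  shows "is_walk X (w @ [p]) \<longleftrightarrow> is_walk X w \<and> is_path X p \<and>
     (length w > 1 \<longrightarrow> plen (last w) > 0) \<and>
     (if even (length w) then psrc (last w) = psrc p else ptgt X (last w) = ptgt X p)"
  (is "?L \<longleftrightarrow> ?R")
proof
  assume L: ?L
  let ?m = "length w"
  let ?w = "w @ [p]"
  have LA: "\<forall>q\<in>set ?w. is_path X q" using L unfolding is_walk_def by blast
  have LB: "\<forall>h. 0 < h \<and> h < length ?w - 1 \<longrightarrow> plen (?w ! h) > 0" using L unfolding is_walk_def by blast
  have LC: "\<forall>h. 2*h + 1 < length ?w \<longrightarrow> ptgt X (?w ! (2*h)) = ptgt X (?w ! (2*h + 1))"
    using L unfolding is_walk_def by blast
  have LD: "\<forall>h. 2*h + 2 < length ?w \<longrightarrow> psrc (?w ! (2*h + 1)) = psrc (?w ! (2*h + 2))"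
    using L unfolding is_walk_def by blast
  have lw: "last w = w ! (?m - 1)" using ne by (simp add: last_conv_nth)
  have A: "\<forall>q\<in>set w. is_path X q" "is_path X p" using LA by simp_all
  have B: "\<forall>h. 0 < h \<and> h < ?m - 1 \<longrightarrow> plen (w ! h) > 0"
  proof (intro allI impI)
    fix h assume h: "0 < h \<and> h < ?m - 1"
    have hl: "h < length w" using h by linarith
    have "plen (?w ! h) > 0" using LB[rule_format, of h] h hl by simp
    with hl show "plen (w ! h) > 0" by (simp add: nth_append)
  qed
  have C: "\<forall>h. 2*h + 1 < ?m \<longrightarrow> ptgt X (w ! (2*h)) = ptgt X (w ! (2*h + 1))"
  proof (intro allI impI)
    fix h assume h: "2*h + 1 < ?m"
    then have "ptgt X (?w ! (2*h)) = ptgt X (?w ! (2*h + 1))" using LC[rule_format, of h] by simp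
    then show "ptgt X (w ! (2*h)) = ptgt X (w ! (2*h + 1))" using h by (simp add: nth_append)
  qed
  have D: "\<forall>h. 2*h + 2 < ?m \<longrightarrow> psrc (w ! (2*h+1)) = psrc (w ! (2*h + 2))"
  proof (intro allI impI)
    fix h assume h: "2*h + 2 < ?m"
    then have "psrc (?w ! (2*h+1)) = psrc (?w ! (2*h + 2))" using LD[rule_format, of h] by simp
    then show "psrc (w ! (2*h+1)) = psrc (w ! (2*h + 2))" using h by (simp add: nth_append)
  qed
  have E: "?m > 1 \<longrightarrow> plen (last w) > 0"
  proof
    assume "?m > 1"
    then have "0 < ?m - 1 \<and> ?m - 1 < length ?w - 1" by simp
    then have "plen (?w ! (?m - 1)) > 0" using LB by blast
    then show "plen (last w) > 0" using ne lw by (simp add: nth_append)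
  qed
  have F: "if even ?m then psrc (last w) = psrc p else ptgt X (last w) = ptgt X p"
  proof (cases "even ?m")
    case True
    then obtain h' where h': "?m = 2*h'" by (rule evenE)
    with ne have "h' \<ge> 1" by (cases h') auto
    define h where "h = h' - 1"
    have h: "?m = 2*h + 2" using h' \<open>h' \<ge> 1\<close> unfolding h_def by simp
    then have "psrc (?w ! (2*h+1)) = psrc (?w ! (2*h + 2))" using LD[rule_format, of h] by simp
    moreover have "2*h + 1 = ?m - 1" "2*h+2 = ?m" using h by simp_all
    moreover have "?m - 1 < ?m" using ne by simp
    ultimately show ?thesis using True lw by (simp add: nth_append)
  next
    case False
    then obtain h where h: "?m = 2*h + 1" using oddE by blast
    then have "ptgt X (?w ! (2*h)) = ptgt X (?w ! (2*h + 1))" using LC[rule_format, of h] by simp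
    moreover have "2*h = ?m - 1" "2*h+1 = ?m" using h by simp_all
    moreover have "?m - 1 < ?m" using ne by simp
    ultimately show ?thesis using False lw by (simp add: nth_append)
  qed
  have "is_walk X w" unfolding is_walk_def using ne A(1) B C D by blast
  then show ?R using A(2) E F by blast
next
  assume R: ?R
  let ?m = "length w"
  have RW: "is_walk X w" and Rp: "is_path X p" and RE: "length w > 1 \<longrightarrow> plen (last w) > 0"
    and RF: "if even (length w) then psrc (last w) = psrc p else ptgt X (last w) = ptgt X p"
    using R by blast+
  have RA: "\<forall>q\<in>set w. is_path X q" using RW unfolding is_walk_def by blast
  have RB: "\<forall>h. 0 < h \<and> h < length w - 1 \<longrightarrow> plen (w ! h) > 0" using RW unfolding is_walk_def by blast
  have RC: "\<forall>h. 2*h + 1 < length w \<longrightarrow> ptgt X (w ! (2*h)) = ptgt X (w ! (2*h + 1))"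
    using RW unfolding is_walk_def by blast
  have RD: "\<forall>h. 2*h + 2 < length w \<longrightarrow> psrc (w ! (2*h + 1)) = psrc (w ! (2*h + 2))"
    using RW unfolding is_walk_def by blast
  have lw: "last w = w ! (?m - 1)" using ne by (simp add: last_conv_nth)
  have A: "\<forall>q\<in>set (w @ [p]). is_path X q" using RA Rp by simp
  have B: "\<forall>h. 0 < h \<and> h < length (w @ [p]) - 1 \<longrightarrow> plen ((w @ [p]) ! h) > 0"
  proof (intro allI impI)
    fix h assume h: "0 < h \<and> h < length (w @ [p]) - 1"
    show "plen ((w @ [p]) ! h) > 0"
    proof (cases "h < ?m - 1")
      case True
      then have "h < ?m" by linarith
      then show ?thesis using RB[rule_format, of h] True h by (simp add: nth_append)
    next
      case False
      then have "h = ?m - 1" "?m > 1" using h by auto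
      moreover have "?m - 1 < ?m" using ne by simp
      ultimately show ?thesis using RE lw by (simp add: nth_append)
    qed
  qed
  have C: "\<forall>h. 2*h + 1 < length (w @ [p]) \<longrightarrow> ptgt X ((w @ [p]) ! (2*h)) = ptgt X ((w @ [p]) ! (2*h + 1))"
  proof (intro allI impI)
    fix h assume h: "2*h + 1 < length (w @ [p])"
    show "ptgt X ((w @ [p]) ! (2*h)) = ptgt X ((w @ [p]) ! (2*h + 1))"
    proof (cases "2*h + 1 < ?m")
      case True
      then show ?thesis using RC[rule_format, of h] by (simp add: nth_append)
    next
      case False
      then have e: "?m = 2*h + 1" using h by simp
      then have "\<not> even ?m" by simp
      then show ?thesis using RF lw e by (simp add: nth_append)
    qed
  qed
  have D: "\<forall>h. 2*h + 2 < length (w @ [p]) \<longrightarrow> psrc ((w @ [p]) ! (2*h+1)) = psrc ((w @ [p]) ! (2*h + 2))"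
  proof (intro allI impI)
    fix h assume h: "2*h + 2 < length (w @ [p])"
    show "psrc ((w @ [p]) ! (2*h+1)) = psrc ((w @ [p]) ! (2*h + 2))"
    proof (cases "2*h + 2 < ?m")
      case True
      then show ?thesis using RD[rule_format, of h] by (simp add: nth_append)
    next
      case False
      then have e: "?m = 2*h + 2" using h by simp
      then have "even ?m" by simp
      then show ?thesis using RF lw e by (simp add: nth_append)
    qed
  qed
  show ?L unfolding is_walk_def using A B C D by blast
qed

lemma walk_grade_snoc: "walk_grade (w @ [p]) = walk_grade w + (-1) ^ length w * int (plen p)"
  unfolding walk_grade_def by (simp add: nth_append)

lemma walk_end_snoc: "walk_end X (w @ [p]) = (if even (length w) then ptgt X p else psrc p)"
  unfolding walk_end_def by simp

lemma walk_start_snoc: "w \<noteq> [] \<Longrightarrow> walk_start (w @ [p]) = walk_start w"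
  unfolding walk_start_def by simp

lemma walk_end_alt: "w \<noteq> [] \<Longrightarrow> walk_end X w = (if even (length w) then psrc (last w) else ptgt X (last w))"
  unfolding walk_end_def by (cases w) auto

lemma walk_zz: "wfq X \<Longrightarrow> is_walk X w \<Longrightarrow> zz X (walk_start w) (walk_end X w) (walk_grade w)"
proof (induction w rule: rev_induct)
  case Nil
  then show ?case by (simp add: is_walk_def)
next
  case (snoc p w)
  show ?case
  proof (cases "w = []")
    case True
    then have "is_path X p" using snoc.prems(2) is_walk_single[of X p] by simp
    from path_zz[OF snoc.prems(1) this] show ?thesis using True
      by (simp add: walk_start_def walk_end_def walk_grade_def)
  next
    case ne: False
    have W: "is_walk X w" "is_path X p"
      "if even (length w) then psrc (last w) = psrc p else ptgt X (last w) = ptgt X p"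
      using snoc.prems(2) is_walk_snoc[OF ne, of X p] by simp_all
    have IH: "zz X (walk_start w) (walk_end X w) (walk_grade w)" using snoc W by blast
    have P: "zz X (psrc p) (ptgt X p) (int (plen p))" using path_zz snoc.prems(1) W(2) by blast
    show ?thesis
    proof (cases "even (length w)")
      case True
      then have "walk_end X w = psrc p" using W(3) walk_end_alt[OF ne] by simp
      from zz_trans[OF P[folded this] IH] show ?thesis
        using True ne by (simp add: walk_grade_snoc walk_end_snoc walk_start_snoc)
    next
      case False
      then have "walk_end X w = ptgt X p" using W(3) walk_end_alt[OF ne] by simp
      from zz_trans[OF zz_sym[OF P snoc.prems(1), folded this] IH] show ?thesis
        using False ne by (simp add: walk_grade_snoc walk_end_snoc walk_start_snoc)
    qed
  qed
qed

lemma walk_start_snoc': "walk_start (w @ [p]) = (if w = [] then psrc p else walk_start w)"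
  unfolding walk_start_def by simp

lemma replace_last:
  assumes "is_walk X (w0 @ [p])" "is_path X p'"
    "if even (length w0) then psrc p' = psrc p else ptgt X p' = ptgt X p"
  shows "is_walk X (w0 @ [p'])"
proof (cases "w0 = []")
  case True
  then show ?thesis using assms(2) is_walk_single[of X p'] by simp
next
  case False
  show ?thesis using assms is_walk_snoc[OF False] by (simp split: if_splits)
qed

lemma ext_fwd:
  assumes "is_path X p" "a \<in> qarrs X" "qsrc X a = ptgt X p"
  shows "is_path X (fst p, snd p @ [a]) \<and> psrc (fst p, snd p @ [a]) = psrc p \<and>
    ptgt X (fst p, snd p @ [a]) = qtgt X a \<and> plen (fst p, snd p @ [a]) = plen p + 1"
  using assms is_path_snoc[of X "fst p" "snd p" a]
  by (simp add: psrc_def ptgt_def plen_def)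

lemma ext_bwd:
  assumes "wfq X" "is_path X p" "a \<in> qarrs X" "qtgt X a = psrc p"
  shows "is_path X (qsrc X a, a # snd p) \<and> psrc (qsrc X a, a # snd p) = qsrc X a \<and>
    ptgt X (qsrc X a, a # snd p) = ptgt X p \<and> plen (qsrc X a, a # snd p) = plen p + 1"
proof -
  have "is_path X (fst p, snd p)" using assms(2) by simp
  moreover have "qsrc X a \<in> qverts X" using assms(1,3) by (simp add: wfq_def)
  ultimately have "is_path X (qsrc X a, a # snd p)"
    using is_path_cons[of X "fst p" "snd p" a] assms by (simp add: psrc_def)
  moreover have "ptgt X (qsrc X a, a # snd p) = ptgt X p"
    using ptgt_cons[of X "qsrc X a" a "snd p"] assms(4) by (simp add: psrc_def)
  ultimately show ?thesis by (simp add: psrc_def plen_def)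
qed

lemma triv_tgt: "plen p = 0 \<Longrightarrow> ptgt X p = psrc p"
  by (simp add: plen_def ptgt_def psrc_def)

lemma zz_walk:
  assumes wf: "wfq X"
  shows "zz X u v k \<Longrightarrow> \<exists>w. is_walk X w \<and> walk_start w = u \<and> walk_end X w = v \<and> walk_grade w = k"
proof (induction rule: zz.induct)
  case (zrefl u)
  have "is_walk X [(u, [])]" using zrefl is_walk_single is_path_nil by metis
  moreover have "walk_start [(u, [])] = u" "walk_end X [(u, [])] = u" "walk_grade [(u, [])] = 0"
    by (simp_all add: walk_start_def walk_end_def walk_grade_def psrc_def ptgt_def plen_def)
  ultimately show ?case by blast
next
  case (zfwd u v k a)
  from zfwd.IH obtain w where w: "is_walk X w" "walk_start w = u" "walk_end X w = v" "walk_grade w = k"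
    by blast
  have "w \<noteq> []" using w(1) by (simp add: is_walk_def)
  then obtain w0 p where wp: "w = w0 @ [p]" by (metis rev_exhaust)
  have pp: "is_path X p" using w(1) wp by (simp add: is_walk_def)
  show ?case
  proof (cases "even (length w0)")
    case True
    have tp: "ptgt X p = v" using w(3) wp True by (simp add: walk_end_snoc)
    define p' where "p' = (fst p, snd p @ [a])"
    have E: "is_path X p'" "psrc p' = psrc p" "ptgt X p' = qtgt X a" "plen p' = plen p + 1"
      using ext_fwd[OF pp zfwd.hyps(2)] zfwd.hyps(3) tp unfolding p'_def by auto
    have "is_walk X (w0 @ [p'])" using replace_last[of X w0 p p'] w(1) wp E True by simp
    moreover have "walk_start (w0 @ [p']) = u" using w(2) wp E
      by (cases "w0 = []") (simp_all add: walk_start_snoc' walk_start_def)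
    moreover have "walk_end X (w0 @ [p']) = qtgt X a" using E True by (simp add: walk_end_snoc)
    moreover have "walk_grade (w0 @ [p']) = k + 1" using w(4) wp E True by (simp add: walk_grade_snoc)
    ultimately show ?thesis by blast
  next
    case odd: False
    have sp: "psrc p = v" using w(3) wp odd by (simp add: walk_end_snoc)
    show ?thesis
    proof (cases "plen p > 0")
      case True
      have vq: "v \<in> qverts X" using wf zfwd.hyps(2,3) by (auto simp: wfq_def)
      have P: "is_path X (v, [a])" using is_path_snoc[of X v "[]" a] vq zfwd.hyps(2,3)
        by (simp add: is_path_nil ptgt_def)
      have ne: "w \<noteq> []" using wp by simp
      have "is_walk X (w @ [(v, [a])])"
        using is_walk_snoc[OF ne, of X "(v, [a])"] w(1) P True sp odd wp by (simp add: psrc_def)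
      moreover have "walk_start (w @ [(v, [a])]) = u" using w(2) ne by (simp add: walk_start_snoc)
      moreover have "walk_end X (w @ [(v, [a])]) = qtgt X a" unfolding walk_end_snoc using odd wp
        by (simp add: ptgt_def)
      moreover have "walk_grade (w @ [(v, [a])]) = k + 1" unfolding walk_grade_snoc using w(4) odd wp
        by (simp add: plen_def)
      ultimately show ?thesis by blast
    next
      case False
      then have p0: "plen p = 0" by simp
      have ne0: "w0 \<noteq> []" using odd by auto
      then obtain w1 q where wq: "w0 = w1 @ [q]" by (metis rev_exhaust)
      have W0: "is_walk X w0" "ptgt X (last w0) = ptgt X p"
        using is_walk_snoc[OF ne0, of X p] w(1) wp odd by auto
      have ev1: "even (length w1)" using odd wq by simp
      have qp: "is_path X q" using W0(1) wq by (simp add: is_walk_def)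
      have tq: "ptgt X q = v" using W0(2) wq triv_tgt[OF p0, of X] sp by simp
      define q' where "q' = (fst q, snd q @ [a])"
      have E: "is_path X q'" "psrc q' = psrc q" "ptgt X q' = qtgt X a" "plen q' = plen q + 1"
        using ext_fwd[OF qp zfwd.hyps(2)] zfwd.hyps(3) tq unfolding q'_def by auto
      have "is_walk X (w1 @ [q'])" using replace_last[of X w1 q q'] W0(1) wq E ev1 by simp
      moreover have "walk_start (w1 @ [q']) = u"
        using w(2) wp wq E by (cases "w1 = []") (simp_all add: walk_start_def)
      moreover have "walk_end X (w1 @ [q']) = qtgt X a" using E ev1 by (simp add: walk_end_snoc)
      moreover have "walk_grade (w1 @ [q']) = k + 1"
      proof -
        have g0: "walk_grade w = walk_grade w0 + (-1)^length w0 * int (plen p)"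
          unfolding wp by (rule walk_grade_snoc)
        have g1: "walk_grade w0 = walk_grade w1 + (-1)^length w1 * int (plen q)"
          unfolding wq by (rule walk_grade_snoc)
        show ?thesis using g0 g1 w(4) E ev1 p0 by (simp add: walk_grade_snoc)
      qed
      ultimately show ?thesis by blast
    qed
  qed
next
  case (zbwd u v k a)
  from zbwd.IH obtain w where w: "is_walk X w" "walk_start w = u" "walk_end X w = v" "walk_grade w = k"
    by blast
  have "w \<noteq> []" using w(1) by (simp add: is_walk_def)
  then obtain w0 p where wp: "w = w0 @ [p]" by (metis rev_exhaust)
  have pp: "is_path X p" using w(1) wp by (simp add: is_walk_def)
  show ?case
  proof (cases "even (length w0)")
    case odd: False
    have sp: "psrc p = v" using w(3) wp odd by (simp add: walk_end_snoc)
    define p' where "p' = (qsrc X a, a # snd p)"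
    have E: "is_path X p'" "psrc p' = qsrc X a" "ptgt X p' = ptgt X p" "plen p' = plen p + 1"
      using ext_bwd[OF wf pp zbwd.hyps(2)] zbwd.hyps(3) sp unfolding p'_def by auto
    have ne0: "w0 \<noteq> []" using odd by auto
    have "is_walk X (w0 @ [p'])" using replace_last[of X w0 p p'] w(1) wp E odd by simp
    moreover have "walk_start (w0 @ [p']) = u" using w(2) wp ne0 by (simp add: walk_start_def)
    moreover have "walk_end X (w0 @ [p']) = qsrc X a" using E odd by (simp add: walk_end_snoc)
    moreover have "walk_grade (w0 @ [p']) = k - 1" using w(4) wp E odd by (simp add: walk_grade_snoc)
    ultimately show ?thesis by blast
  next
    case ev: True
    have tp: "ptgt X p = v" using w(3) wp ev by (simp add: walk_end_snoc)
    show ?thesis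
    proof (cases "plen p > 0 \<or> w0 = []")
      case True
      have vq: "v \<in> qverts X" using wf zbwd.hyps(2,3) by (auto simp: wfq_def)
      have P: "is_path X (qsrc X a, [a])"
        using ext_bwd[OF wf, of "(v, [])" a] vq zbwd.hyps(2,3) by (simp add: is_path_nil psrc_def)
      have ne: "w \<noteq> []" using wp by simp
      have "is_walk X (w @ [(qsrc X a, [a])])"
        using is_walk_snoc[OF ne, of X "(qsrc X a, [a])"] w(1) P True tp ev wp zbwd.hyps(3)
        by (auto simp: ptgt_def)
      moreover have "walk_start (w @ [(qsrc X a, [a])]) = u" using w(2) ne by (simp add: walk_start_snoc)
      moreover have "walk_end X (w @ [(qsrc X a, [a])]) = qsrc X a" unfolding walk_end_snoc using ev wp
        by (simp add: psrc_def)
      moreover have "walk_grade (w @ [(qsrc X a, [a])]) = k - 1" unfolding walk_grade_snoc using w(4) ev wp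
        by (simp add: plen_def)
      ultimately show ?thesis by blast
    next
      case False
      then have p0: "plen p = 0" and ne0: "w0 \<noteq> []" by auto
      then obtain w1 q where wq: "w0 = w1 @ [q]" by (metis rev_exhaust)
      have W0: "is_walk X w0" "psrc (last w0) = psrc p"
        using is_walk_snoc[OF ne0, of X p] w(1) wp ev by auto
      have od1: "odd (length w1)" using ev wq by simp
      then have ne1: "w1 \<noteq> []" by auto
      have qp: "is_path X q" using W0(1) wq by (simp add: is_walk_def)
      have sq: "psrc q = v" using W0(2) wq triv_tgt[OF p0, of X] tp by simp
      define q' where "q' = (qsrc X a, a # snd q)"
      have E: "is_path X q'" "psrc q' = qsrc X a" "ptgt X q' = ptgt X q" "plen q' = plen q + 1"
        using ext_bwd[OF wf qp zbwd.hyps(2)] zbwd.hyps(3) sq unfolding q'_def by auto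
      have "is_walk X (w1 @ [q'])" using replace_last[of X w1 q q'] W0(1) wq E od1 by simp
      moreover have "walk_start (w1 @ [q']) = u"
        using w(2) wp wq ne1 by (simp add: walk_start_def)
      moreover have "walk_end X (w1 @ [q']) = qsrc X a" using E od1 by (simp add: walk_end_snoc)
      moreover have "walk_grade (w1 @ [q']) = k - 1"
      proof -
        have g0: "walk_grade w = walk_grade w0 + (-1)^length w0 * int (plen p)"
          unfolding wp by (rule walk_grade_snoc)
        have g1: "walk_grade w0 = walk_grade w1 + (-1)^length w1 * int (plen q)"
          unfolding wq by (rule walk_grade_snoc)
        show ?thesis using g0 g1 w(4) E od1 p0 by (simp add: walk_grade_snoc)
      qed
      ultimately show ?thesis by blast
    qed
  qed
qed

lemma Z_simps:
  "qverts (Zquiver Q M) = qverts Q \<times> UNIV"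
  "qarrs (Zquiver Q M) = {ZAlpha \<alpha> t | \<alpha> t. \<alpha> \<in> qarrs Q} \<union> {ZBeta p t | p t. p \<in> M}"
  "qsrc (Zquiver Q M) (ZAlpha \<alpha> t) = (qsrc Q \<alpha>, t)"
  "qtgt (Zquiver Q M) (ZAlpha \<alpha> t) = (qtgt Q \<alpha>, t)"
  "qsrc (Zquiver Q M) (ZBeta p t) = (ptgt Q p, t)"
  "qtgt (Zquiver Q M) (ZBeta p t) = (psrc p, t + 1)"
  by (simp_all add: Zquiver_def)

lemma wf_Z:
  assumes "wfq Q" "\<forall>p\<in>M. is_path Q p"
  shows "wfq (Zquiver Q M)"
  unfolding wfq_def
proof
  fix e assume e: "e \<in> qarrs (Zquiver Q M)"
  then show "qsrc (Zquiver Q M) e \<in> qverts (Zquiver Q M) \<and> qtgt (Zquiver Q M) e \<in> qverts (Zquiver Q M)"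
  proof (cases e)
    case (ZAlpha \<alpha> t)
    then show ?thesis using e assms(1) by (auto simp: Z_simps wfq_def)
  next
    case (ZBeta p t)
    then have "p \<in> M" using e by (auto simp: Z_simps)
    then have "is_path Q p" using assms(2) by blast
    then have "ptgt Q p \<in> qverts Q" "psrc p \<in> qverts Q"
      using path_tgt_in[OF assms(1)] by (auto simp: is_path_def psrc_def)
    then show ?thesis using ZBeta by (simp add: Z_simps)
  qed
qed

lemma zz_eq: "zz X a b k1 \<Longrightarrow> k1 = k2 \<Longrightarrow> zz X a b k2" by simp

lemma zz_Z:
  assumes wf: "wfq Q" and MP: "\<forall>p\<in>M. is_path Q p \<and> plen p = n"
  shows "zz (Zquiver Q M) a b k \<Longrightarrow> zz Q (fst a) (fst b) (k - int (n+1) * (snd b - snd a))"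
proof (induction rule: zz.induct)
  case (zrefl u)
  then have "fst u \<in> qverts Q" by (auto simp: Z_simps)
  then show ?case using zz.zrefl by simp
next
  case (zfwd u v k e)
  show ?case
  proof (cases e)
    case (ZAlpha \<alpha> t)
    then have A: "\<alpha> \<in> qarrs Q" "v = (qsrc Q \<alpha>, t)" using zfwd.hyps(2,3) by (auto simp: Z_simps)
    have "zz Q (fst u) (qtgt Q \<alpha>) (k - int (n+1) * (t - snd u) + 1)"
      using zz.zfwd[OF zfwd.IH[unfolded A(2) fst_conv snd_conv] A(1)] by simp
    then show ?thesis using ZAlpha by (simp add: Z_simps algebra_simps)
  next
    case (ZBeta p t)
    then have A: "p \<in> M" "v = (ptgt Q p, t)" using zfwd.hyps(2,3) by (auto simp: Z_simps)
    have P: "zz Q (ptgt Q p) (psrc p) (- int n)"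
      using zz_sym[OF path_zz[OF wf] wf] MP A(1) by fastforce
    have "zz Q (fst u) (psrc p) (k - int (n+1) * (t - snd u) + - int n)"
      using zz_trans[OF P zfwd.IH[unfolded A(2) fst_conv snd_conv]] by simp
    then show ?thesis using ZBeta by (auto simp: Z_simps algebra_simps intro: zz_eq)
  qed
next
  case (zbwd u v k e)
  show ?case
  proof (cases e)
    case (ZAlpha \<alpha> t)
    then have A: "\<alpha> \<in> qarrs Q" "v = (qtgt Q \<alpha>, t)" using zbwd.hyps(2,3) by (auto simp: Z_simps)
    have "zz Q (fst u) (qsrc Q \<alpha>) (k - int (n+1) * (t - snd u) - 1)"
      using zz.zbwd[OF zbwd.IH[unfolded A(2) fst_conv snd_conv] A(1)] by simp
    then show ?thesis using ZAlpha by (simp add: Z_simps algebra_simps)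
  next
    case (ZBeta p t)
    then have A: "p \<in> M" "v = (psrc p, t + 1)" using zbwd.hyps(2,3) by (auto simp: Z_simps)
    have P: "zz Q (psrc p) (ptgt Q p) (int n)"
      using path_zz[OF wf] MP A(1) by fastforce
    have "zz Q (fst u) (ptgt Q p) (k - int (n+1) * (t + 1 - snd u) + int n)"
      using zz_trans[OF P zbwd.IH[unfolded A(2) fst_conv snd_conv]] by simp
    then show ?thesis using ZBeta by (auto simp: Z_simps algebra_simps intro: zz_eq)
  qed
qed

theorem theorem4p7:
  fixes Q :: "('v, 'a) quiver"
    and \<rho> :: "(('v, 'a) path \<Rightarrow> 'k::field) set"
    and n :: nat
    and M :: "('v, 'a) path set"
  assumes "finite_quiver Q"
    and "bound_quiver Q \<rho>"
    and "properly_graded n Q \<rho>"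
    and "top_basis n Q \<rho> M"
    and "nicely_graded Q"
  shows "nicely_graded (Zquiver Q M)"
proof -
  have wf: "wfq Q" using assms(1) by (simp add: finite_quiver_def wfq_def)
  have MP: "\<forall>p\<in>M. is_path Q p \<and> plen p = n"
    using assms(3,4) by (auto simp: top_basis_def properly_graded_def maximal_bound_path_def bound_path_def)
  have wfZ: "wfq (Zquiver Q M)" using wf_Z[OF wf] MP by blast
  show ?thesis unfolding nicely_graded_def
  proof (intro allI impI)
    fix w assume H: "is_walk (Zquiver Q M) w \<and> walk_start w = walk_end (Zquiver Q M) w"
    have "zz (Zquiver Q M) (walk_start w) (walk_end (Zquiver Q M) w) (walk_grade w)"
      using walk_zz[OF wfZ] H by blast
    then have "zz (Zquiver Q M) (walk_start w) (walk_start w) (walk_grade w)" using H by simp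
    from zz_Z[OF wf MP this] have "zz Q (fst (walk_start w)) (fst (walk_start w)) (walk_grade w)"
      by simp
    from zz_walk[OF wf this] obtain w' where
      "is_walk Q w'" "walk_start w' = walk_end Q w'" "walk_grade w' = walk_grade w" by metis
    then show "walk_grade w = 0" using assms(5) unfolding nicely_graded_def by metis
  qed
qed

end
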